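(* Let $G$ be the two-player game with $A_i=\{a_{i1},a_{i2}\}$ and $\pi(a_{11},a_{21})=(5,5)$, $\pi(a_{11},a_{22})=(0,0)$, $\pi(a_{12},a_{21})=(0,0)$, $\pi(a_{12},a_{22})=(5,10)$. Then for every $p\in(0,1)$, the pure profile $(a_{11},a_{21})$ is stable for the degree of observability $p$ (although it is Pareto dominated by $(a_{12},a_{22})$).
   Context: Preference types: $\Theta=\mathbb{R}^A$, $A=A_1\times A_2$ (extended bilinearly; $\pi_i$ likewise). $\mathcal{M}(\Theta^2)$: product distributions $\mu=\mu_1\times\mu_2$ with finitely supported marginals; $\mu(\theta)=\mu_1(\theta_1)\mu_2(\theta_2)$, $\mu_{-i}=\mu_j$ ($j\ne i$). Mutants: for nonempty $J\subseteq N=\{1,2\}$, $\tilde\theta_J\in\prod_{j\in J}(\Theta\setminus\operatorname{supp}\mu_j)$ with shares $\varepsilon\in(0,1)^{|J|}$, $\|\varepsilon\|=\max_j\varepsilon_j$; post-entry $\tilde\mu^\varepsilon_i=(1-\varepsilon_i)\mu_i+\varepsilon_i\delta_{\tilde\theta_i}$ for $i\in J$, $\mu_i$ otherwise. Partial observability with degree $p\in(0,1)$: each player independently observes opponents' types with probability $p$ and otherwise knows only $\mu_{-i}$. Strategies: $b:\operatorname{supp}\mu\to\prod_i\Delta(A_i)$ (play when observing) and $s_i:\operatorname{supp}\mu_i\to\Delta(A_i)$ (play when not observing), $s(\theta)=(s_i(\theta_i))_i$. For a matched profile $\theta$ and the set $T\subseteq N$ of non-observing players, the profile played is $(s(\theta)_T,b(\theta)_{-T})$.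 $(b,s)$ is an equilibrium if for all $\theta\in\operatorname{supp}\mu$ and $i$: $b_i(\theta)\in\arg\max_{\sigma_i}\sum_{T\subseteq N\setminus\{i\}}p^{n-1-|T|}(1-p)^{|T|}\theta_i(\sigma_i,(s_{-i}(\theta_{-i})_T,b_{-i}(\theta)_{-T}))$ and $s_i(\theta_i)\in\arg\max_{\sigma_i}\sum_{\theta'_{-i}}\mu_{-i}(\theta'_{-i})\sum_{T\subseteq N\setminus\{i\}}p^{n-1-|T|}(1-p)^{|T|}\theta_i(\sigma_i,(s_{-i}(\theta'_{-i})_T,b_{-i}(\theta_i,\theta'_{-i})_{-T}))$ (here $n=2$); $B_p(\mu)$ is the set of these; $(\mu,b,s)$ is a configuration. Aggregate outcome: $\varphi_{\mu,b,s}(a)=\sum_{\theta}\mu(\theta)\sum_{T\subseteq N}p^{n-|T|}(1-p)^{|T|}\prod_i(s(\theta)_T,b(\theta)_{-T})_i(a_i)$. Average fitness: $\Pi_{\theta_i}(\mu;b,s)=\sum_{\theta'_{-i}}\mu_{-i}(\theta'_{-i})\sum_{T\subseteq N}p^{n-|T|}(1-p)^{|T|}\pi_i(s(\theta_i,\theta'_{-i})_T,b(\theta_i,\theta'_{-i})_{-T})$. Balanced: equal average fitness of all types within each population. Nearby set: $B_p^\eta(\tilde\mu^\varepsilon;b,s)=\{(\tilde b,\tilde s)\in B_p(\tilde\mu^\varepsilon):\max_i\|\tilde b_i(\theta)-b_i(\theta)\|\le\eta,\ \max_i\|\tilde s_i(\theta_i)-s_i(\theta_i)\|\le\eta\ \forall\theta\in\operatorname{supp}\mu\}$.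 $(\mu,b,s)$ is stable (for degree $p$) if balanced and for every nonempty $J$, every $\tilde\theta_J$, every $\eta>0$, there are $\bar\eta\in[0,\eta)$, $\bar\epsilon\in(0,1)$ such that for all $\varepsilon$ with $\|\varepsilon\|\in(0,\bar\epsilon)$, $B_p^{\bar\eta}(\tilde\mu^\varepsilon;b,s)\ne\emptyset$ and each of its elements satisfies (i) some $j\in J$ has $\Pi_{\theta_j}>\Pi_{\tilde\theta_j}$ (post-entry) for all $\theta_j\in\operatorname{supp}\mu_j$, or (ii) for every $i$ all types in $\operatorname{supp}\tilde\mu^\varepsilon_i$ have equal post-entry average fitness. A pure profile $a^*$ is stable for degree $p$ if the point mass at $a^*$ is the aggregate outcome of a stable configuration for $p$. *)

theory Defs
  imports Complex_Main
begin

datatype act = act1 | act2   (* a_{i1} = act1, a_{i2} = act2 for player i *)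

lemma UNIV_act: "(UNIV :: act set) = {act1, act2}"
  using act.exhaust by auto

instance act :: finite
  by standard (simp add: UNIV_act)

datatype pl = P1 | P2

fun other :: "pl \<Rightarrow> pl" where
  "other P1 = P2" | "other P2 = P1"

type_synonym prof = "act \<times> act"          (* pure profile (action of player 1, action of player 2) *)
type_synonym ty = "prof \<Rightarrow> real"         (* preference types Theta = R^A *)
type_synonym mix = "act \<Rightarrow> real"

definition is_mix :: "mix \<Rightarrow> bool" where
  "is_mix x \<longleftrightarrow> (\<forall>a. 0 \<le> x a) \<and> (\<Sum>a\<in>UNIV. x a) = 1"

text \<open>Bilinear extension of a type/payoff to a mixed profile (player 1's strategy first).\<close>
definition evm :: "ty \<Rightarrow> mix \<Rightarrow> mix \<Rightarrow> real" where
  "evm th x y = (\<Sum>a\<in>UNIV. \<Sum>c\<in>UNIV. x a * y c * th (a, c))"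

definition evo :: "pl \<Rightarrow> ty \<Rightarrow> mix \<Rightarrow> mix \<Rightarrow> real" where
  "evo i th x y = (if i = P1 then evm th x y else evm th y x)"

definition mt :: "pl \<Rightarrow> ty \<Rightarrow> ty \<Rightarrow> ty \<times> ty" where
  "mt i t t' = (if i = P1 then (t, t') else (t', t))"

text \<open>A population state is a product distribution; mu i is the finitely supported marginal of population i.\<close>
definition supp :: "(ty \<Rightarrow> real) \<Rightarrow> ty set" where
  "supp d = {t. d t \<noteq> 0}"

definition fin_dist :: "(ty \<Rightarrow> real) \<Rightarrow> bool" where
  "fin_dist d \<longleftrightarrow> finite (supp d) \<and> (\<forall>t. 0 \<le> d t) \<and> (\<Sum>t\<in>supp d. d t) = 1"

definition pop_state :: "(pl \<Rightarrow> ty \<Rightarrow> real) \<Rightarrow> bool" where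
  "pop_state mu \<longleftrightarrow> (\<forall>i. fin_dist (mu i))"

text \<open>b i (t1,t2): play of player i when observing in the match (t1,t2);
  s i t: play of player i of type t when not observing.\<close>
definition is_eq :: "real \<Rightarrow> (pl \<Rightarrow> ty \<Rightarrow> real) \<Rightarrow> (pl \<Rightarrow> ty \<times> ty \<Rightarrow> mix) \<Rightarrow> (pl \<Rightarrow> ty \<Rightarrow> mix) \<Rightarrow> bool" where
  "is_eq p mu b s \<longleftrightarrow>
     (\<forall>i t t'. t \<in> supp (mu i) \<and> t' \<in> supp (mu (other i)) \<longrightarrow>
        is_mix (b i (mt i t t')) \<and>
        (\<forall>\<sigma>. is_mix \<sigma> \<longrightarrow>
           p * evo i t \<sigma> (b (other i) (mt i t t')) + (1 - p) * evo i t \<sigma> (s (other i) t')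
           \<le> p * evo i t (b i (mt i t t')) (b (other i) (mt i t t'))
             + (1 - p) * evo i t (b i (mt i t t')) (s (other i) t'))) \<and>
     (\<forall>i t. t \<in> supp (mu i) \<longrightarrow>
        is_mix (s i t) \<and>
        (\<forall>\<sigma>. is_mix \<sigma> \<longrightarrow>
           (\<Sum>t'\<in>supp (mu (other i)). mu (other i) t' *
              (p * evo i t \<sigma> (b (other i) (mt i t t')) + (1 - p) * evo i t \<sigma> (s (other i) t')))
           \<le> (\<Sum>t'\<in>supp (mu (other i)). mu (other i) t' *
              (p * evo i t (s i t) (b (other i) (mt i t t')) + (1 - p) * evo i t (s i t) (s (other i) t')))))"

text \<open>Expected value of f in a match th, summing over the sets T of non-observing players.\<close>
definition eo :: "real \<Rightarrow> (pl \<Rightarrow> ty \<times> ty \<Rightarrow> mix) \<Rightarrow> (pl \<Rightarrow> ty \<Rightarrow> mix) \<Rightarrow> ty \<times> ty \<Rightarrow> ty \<Rightarrow> real" where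
  "eo p b s th f =
     p ^ 2 * evm f (b P1 th) (b P2 th)
   + p * (1 - p) * evm f (s P1 (fst th)) (b P2 th)
   + p * (1 - p) * evm f (b P1 th) (s P2 (snd th))
   + (1 - p) ^ 2 * evm f (s P1 (fst th)) (s P2 (snd th))"

definition agg :: "real \<Rightarrow> (pl \<Rightarrow> ty \<Rightarrow> real) \<Rightarrow> (pl \<Rightarrow> ty \<times> ty \<Rightarrow> mix) \<Rightarrow> (pl \<Rightarrow> ty \<Rightarrow> mix) \<Rightarrow> prof \<Rightarrow> real" where
  "agg p mu b s a =
     (\<Sum>t1\<in>supp (mu P1). \<Sum>t2\<in>supp (mu P2).
        mu P1 t1 * mu P2 t2 * eo p b s (t1, t2) (\<lambda>c. if c = a then 1 else 0))"

text \<open>Average fitness of type t in population i; pay i is the material payoff of player i.\<close>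
definition fitness :: "(pl \<Rightarrow> ty) \<Rightarrow> real \<Rightarrow> (pl \<Rightarrow> ty \<Rightarrow> real) \<Rightarrow> (pl \<Rightarrow> ty \<times> ty \<Rightarrow> mix) \<Rightarrow> (pl \<Rightarrow> ty \<Rightarrow> mix) \<Rightarrow> pl \<Rightarrow> ty \<Rightarrow> real" where
  "fitness pay p mu b s i t =
     (\<Sum>t'\<in>supp (mu (other i)). mu (other i) t' * eo p b s (mt i t t') (pay i))"

definition balanced :: "(pl \<Rightarrow> ty) \<Rightarrow> real \<Rightarrow> (pl \<Rightarrow> ty \<Rightarrow> real) \<Rightarrow> (pl \<Rightarrow> ty \<times> ty \<Rightarrow> mix) \<Rightarrow> (pl \<Rightarrow> ty \<Rightarrow> mix) \<Rightarrow> bool" where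
  "balanced pay p mu b s \<longleftrightarrow>
     (\<forall>i. \<forall>t\<in>supp (mu i). \<forall>t'\<in>supp (mu i). fitness pay p mu b s i t = fitness pay p mu b s i t')"

definition post :: "(pl \<Rightarrow> ty \<Rightarrow> real) \<Rightarrow> pl set \<Rightarrow> (pl \<Rightarrow> ty) \<Rightarrow> (pl \<Rightarrow> real) \<Rightarrow> pl \<Rightarrow> ty \<Rightarrow> real" where
  "post mu J mut eps i =
     (if i \<in> J then (\<lambda>t. (1 - eps i) * mu i t + eps i * (if t = mut i then 1 else 0)) else mu i)"

text \<open>Distance of mixed strategies (max norm; any norm gives the same notion of stability).\<close>
definition mdist :: "mix \<Rightarrow> mix \<Rightarrow> real" where
  "mdist x y = Max ((\<lambda>a. \<bar>x a - y a\<bar>) ` UNIV)"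

definition nearby :: "real \<Rightarrow> (pl \<Rightarrow> ty \<Rightarrow> real) \<Rightarrow> (pl \<Rightarrow> ty \<Rightarrow> real) \<Rightarrow> (pl \<Rightarrow> ty \<times> ty \<Rightarrow> mix) \<Rightarrow> (pl \<Rightarrow> ty \<Rightarrow> mix) \<Rightarrow> real
     \<Rightarrow> ((pl \<Rightarrow> ty \<times> ty \<Rightarrow> mix) \<times> (pl \<Rightarrow> ty \<Rightarrow> mix)) set" where
  "nearby p mu' mu b s eta =
     {(b', s'). is_eq p mu' b' s' \<and>
        (\<forall>i t1 t2. t1 \<in> supp (mu P1) \<and> t2 \<in> supp (mu P2) \<longrightarrow> mdist (b' i (t1, t2)) (b i (t1, t2)) \<le> eta) \<and>
        (\<forall>i t. t \<in> supp (mu i) \<longrightarrow> mdist (s' i t) (s i t) \<le> eta)}"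

definition stable_config :: "(pl \<Rightarrow> ty) \<Rightarrow> real \<Rightarrow> (pl \<Rightarrow> ty \<Rightarrow> real) \<Rightarrow> (pl \<Rightarrow> ty \<times> ty \<Rightarrow> mix) \<Rightarrow> (pl \<Rightarrow> ty \<Rightarrow> mix) \<Rightarrow> bool" where
  "stable_config pay p mu b s \<longleftrightarrow>
     balanced pay p mu b s \<and>
     (\<forall>J mut eta. J \<noteq> {} \<longrightarrow> (\<forall>j\<in>J. mut j \<notin> supp (mu j)) \<longrightarrow> 0 < eta \<longrightarrow>
        (\<exists>eta' ep. 0 \<le> eta' \<and> eta' < eta \<and> 0 < ep \<and> ep < 1 \<and>
           (\<forall>eps. (\<forall>j\<in>J. 0 < eps j \<and> eps j < ep) \<longrightarrow>
              (let mu' = post mu J mut eps in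
                 nearby p mu' mu b s eta' \<noteq> {} \<and>
                 (\<forall>(b', s')\<in>nearby p mu' mu b s eta'.
                    (\<exists>j\<in>J. \<forall>t\<in>supp (mu j). fitness pay p mu' b' s' j t > fitness pay p mu' b' s' j (mut j))
                    \<or> balanced pay p mu' b' s')))))"

definition stable_profile :: "(pl \<Rightarrow> ty) \<Rightarrow> real \<Rightarrow> prof \<Rightarrow> bool" where
  "stable_profile pay p a \<longleftrightarrow>
     (\<exists>mu b s. pop_state mu \<and> is_eq p mu b s \<and> stable_config pay p mu b s \<and>
        (\<forall>c. agg p mu b s c = (if c = a then 1 else 0)))"

fun piG :: "pl \<Rightarrow> ty" where
  "piG P1 (act1, act1) = 5" | "piG P2 (act1, act1) = 5"
| "piG P1 (act1, act2) = 0" | "piG P2 (act1, act2) = 0"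
| "piG P1 (act2, act1) = 0" | "piG P2 (act2, act1) = 0"
| "piG P1 (act2, act2) = 5" | "piG P2 (act2, act2) = 10"

end

theory Submission
  imports Defs
begin


definition T0 :: ty where "T0 = (\<lambda>(a,c). (if a = act1 then 1 else 0) + (if c = act1 then 1 else 0))"
definition pm :: "real \<Rightarrow> mix" where "pm q = (\<lambda>a. if a = act1 then q else 1 - q)"

lemma sum_act: "(\<Sum>a\<in>UNIV. f a) = f act1 + (f act2 :: real)"
  by (simp add: UNIV_act)

lemma evm_pm: "evm f (pm x) (pm y) = x*y*f(act1,act1) + x*(1-y)*f(act1,act2) + (1-x)*y*f(act2,act1) + (1-x)*(1-y)*f(act2,act2)"
  by (simp add: evm_def sum_act pm_def)

lemma is_mix_pm: "is_mix (pm q) \<longleftrightarrow> 0 \<le> q \<and> q \<le> 1"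
  by (auto simp: is_mix_def sum_act pm_def)

lemma mix_eq_pm: "is_mix x \<Longrightarrow> x = pm (x act1) \<and> 0 \<le> x act1 \<and> x act1 \<le> 1"
proof -
  assume "is_mix x"
  then have "x act1 + x act2 = 1" "\<forall>a. 0 \<le> x a" by (auto simp: is_mix_def sum_act)
  then have x2: "x act2 = 1 - x act1" by simp
  have "x = pm (x act1)" unfolding pm_def
  proof
    fix a show "x a = (if a = act1 then x act1 else 1 - x act1)" using x2 by (cases a) auto
  qed
  moreover have "0 \<le> x act1" "0 \<le> x act2" using \<open>\<forall>a. 0 \<le> x a\<close> by auto
  ultimately show ?thesis using x2 by simp
qed

definition own :: "pl \<Rightarrow> ty \<Rightarrow> act \<Rightarrow> act \<Rightarrow> real" where
  "own i th a c = (if i = P1 then th (a,c) else th (c,a))"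

definition W :: "pl \<Rightarrow> ty \<Rightarrow> real \<Rightarrow> real \<Rightarrow> real" where
  "W i th x y = x*y*own i th act1 act1 + x*(1-y)*own i th act1 act2 + (1-x)*y*own i th act2 act1 + (1-x)*(1-y)*own i th act2 act2"

lemma evo_pm: "evo i th (pm x) (pm y) = W i th x y"
  by (auto simp: evo_def evm_pm W_def own_def algebra_simps)

lemma W_T0: "W i T0 x y = x + y"
  by (simp add: W_def own_def T0_def algebra_simps)

lemma evo_T0: "is_mix x \<Longrightarrow> is_mix y \<Longrightarrow> evo i T0 x y = x act1 + y act1"
  by (metis mix_eq_pm evo_pm W_T0)

lemma mt_other: "mt (other i) t' t = mt i t t'"
  by (cases i) (auto simp: mt_def)

lemma other_other: "other (other i) = i" by (cases i) auto

definition adv :: "pl \<Rightarrow> ty \<Rightarrow> real \<Rightarrow> real" where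
  "adv i th y = W i th 1 y - W i th 0 y"

lemma W_lin: "W i th x y = x * adv i th y + W i th 0 y"
  by (simp add: adv_def W_def algebra_simps)


lemma W_aff: "W i th x y = W i th x 0 + y * (W i th x 1 - W i th x 0)"
  by (simp add: W_def algebra_simps)

lemma W_comb: "a + b = 1 \<Longrightarrow> a * W i th x y + b * W i th x z = W i th x (a*y + b*z)"
proof -
  assume "a + b = 1"
  hence b: "b = 1 - a" by simp
  show ?thesis
    apply (subst (1 2 3) W_aff)
    unfolding b by (simp add: algebra_simps)
qed

lemma adv_affine: "adv i th y = y * adv i th 1 + (1 - y) * adv i th 0"
  by (simp add: adv_def W_def algebra_simps)

lemma BR: "0 \<le> s \<Longrightarrow> s \<le> 1 \<Longrightarrow> (adv i th y > 0 \<longrightarrow> x = 1) \<Longrightarrow> (adv i th y < 0 \<longrightarrow> x = 0)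
   \<Longrightarrow> W i th s y \<le> W i th x y"
proof -
  assume a: "0 \<le> s" "s \<le> 1" "adv i th y > 0 \<longrightarrow> x = 1" "adv i th y < 0 \<longrightarrow> x = 0"
  have "s * adv i th y \<le> x * adv i th y"
  proof (cases "adv i th y > 0")
    case True thus ?thesis using a by (simp add: mult_left_le_one_le)
  next
    case False
    show ?thesis
    proof (cases "adv i th y < 0")
      case True thus ?thesis using a by (simp add: mult_nonneg_nonpos)
    next
      case False thus ?thesis using \<open>\<not> adv i th y > 0\<close> by simp
    qed
  qed
  thus ?thesis by (subst (1 2) W_lin) simp
qed


lemma core:
  fixes p e1 e2 b1 s1 g1 b2 s2 g2 :: real
  assumes p: "0 < p" "p < 1"
    and e: "0 < e1" "e1 < (1-p)/10" "0 < e2" "e2 < (1-p)/10"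
    and r: "0 \<le> b1" "b1 \<le> 1" "0 \<le> s1" "s1 \<le> 1" "0 \<le> g1" "g1 \<le> 1"
           "0 \<le> b2" "b2 \<le> 1" "0 \<le> s2" "s2 \<le> 1" "0 \<le> g2" "g2 \<le> 1"
    and q1: "q1 = p*b1 + (1-p)*s1" and q2: "q2 = p*b2 + (1-p)*s2"
    and C: "C = p^2*(g1*g2 + (1-g1)*(1-g2)) + p*(1-p)*(s1*g2 + (1-s1)*(1-g2))
              + p*(1-p)*(g1*s2 + (1-g1)*(1-s2)) + (1-p)^2*(s1*s2 + (1-s1)*(1-s2))"
    and P: "P = p^2*((1-g1)*(1-g2)) + p*(1-p)*((1-s1)*(1-g2))
              + p*(1-p)*((1-g1)*(1-s2)) + (1-p)^2*((1-s1)*(1-s2))"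
    and H1: "(1-e2) + e2*q2 \<le> (1-e2)*q1 + e2*C"
    and H2: "(1-e1) + e1*q1 \<le> (1-e1)*q2 + e1*(C + P)"
  shows "q1 = 1 \<and> q2 = 1 \<and> C = 1 \<and> P = 0"
proof -
  define u where "u = 1 - q1"
  define v where "v = 1 - q2"
  define m where "m = 1 - C"
  have pp: "0 < 1 - p" using p by simp
  have f1: "(1-p)*(1-s1) \<le> u" unfolding u_def q1 using r p by (simp add: algebra_simps)
  have f2: "(1-p)*(1-s2) \<le> v" unfolding v_def q2 using r p by (simp add: algebra_simps)
  have u0: "0 \<le> u" unfolding u_def q1 using r p
    by (smt (verit) mult_left_le mult_nonneg_nonneg)
  have v0: "0 \<le> v" unfolding v_def q2 using r p
    by (smt (verit) mult_left_le mult_nonneg_nonneg)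
  have mis: "g1*(1-s2) + (1-g1)*s2 \<ge> (1-g1) - (1-s2)"
  proof -
    have "g1*(1-s2) + (1-g1)*s2 - ((1-g1) - (1-s2)) = 2*g1*(1-s2)" by (simp add: algebra_simps)
    thus ?thesis using r by (smt (verit) mult_nonneg_nonneg)
  qed
  have m_eq: "m = p^2*(g1*(1-g2) + (1-g1)*g2) + p*(1-p)*(s1*(1-g2) + (1-s1)*g2)
              + p*(1-p)*(g1*(1-s2) + (1-g1)*s2) + (1-p)^2*(s1*(1-s2) + (1-s1)*s2)"
    unfolding m_def C by (simp add: algebra_simps power2_eq_square)
  have nn: "\<And>x y::real. 0 \<le> x \<Longrightarrow> x \<le> 1 \<Longrightarrow> 0 \<le> y \<Longrightarrow> y \<le> 1 \<Longrightarrow> 0 \<le> x*(1-y) + (1-x)*y"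
    by (intro add_nonneg_nonneg mult_nonneg_nonneg) auto
  have pq: "0 \<le> p^2" "0 \<le> p*(1-p)" "0 \<le> (1-p)^2" using p by auto
  have f3: "p*(1-p)*((1-g1) - (1-s2)) \<le> m"
  proof -
    have a: "0 \<le> p^2*(g1*(1-g2) + (1-g1)*g2)" using pq nn r by simp
    have b: "0 \<le> p*(1-p)*(s1*(1-g2) + (1-s1)*g2)" using pq nn r by simp
    have c: "0 \<le> (1-p)^2*(s1*(1-s2) + (1-s1)*s2)" using pq nn r by simp
    have d: "p*(1-p)*((1-g1) - (1-s2)) \<le> p*(1-p)*(g1*(1-s2) + (1-g1)*s2)"
      using mis pq(2) by (rule mult_left_mono)
    show ?thesis using a b c d m_eq by linarith
  qed
  have m0: "0 \<le> m"
  proof -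
    have a: "0 \<le> p^2*(g1*(1-g2) + (1-g1)*g2)" using pq nn r by simp
    have b: "0 \<le> p*(1-p)*(s1*(1-g2) + (1-s1)*g2)" using pq nn r by simp
    have c: "0 \<le> (1-p)^2*(s1*(1-s2) + (1-s1)*s2)" using pq nn r by simp
    have d: "0 \<le> p*(1-p)*(g1*(1-s2) + (1-g1)*s2)" using pq nn r by simp
    show ?thesis using a b c d m_eq by linarith
  qed
  have P0: "0 \<le> P" unfolding P using pq r by simp
  have f4: "(1-p)*P \<le> m + u + 2*v"
  proof -
    have a: "(1-p)*(p^2*((1-g1)*(1-g2))) \<le> m + p^2 * v"
    proof -
      have "(1-p)*(p^2*((1-g1)*(1-g2))) \<le> (1-p)*(p^2*(1-g1))"
        using r pp by (intro mult_left_mono) (auto simp: mult_left_le)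
      also have "\<dots> = p * (p*(1-p)*(1-g1))" by (simp add: power2_eq_square algebra_simps)
      also have "\<dots> \<le> p * (m + p*(1-p)*(1-s2))" using f3 p
        by (intro mult_left_mono) (auto simp: algebra_simps)
      also have "\<dots> = p*m + p^2 * ((1-p)*(1-s2))" by (simp add: power2_eq_square algebra_simps)
      also have "\<dots> \<le> m + p^2 * v" using f2 m0 p
        by (smt (verit) mult_left_le_one_le mult_left_mono zero_le_power2 power_le_one)
      finally show ?thesis .
    qed
    have L: "\<And>a x y::real. 0 \<le> a \<Longrightarrow> 0 \<le> x \<Longrightarrow> x \<le> 1 \<Longrightarrow> 0 \<le> y \<Longrightarrow> y \<le> 1 \<Longrightarrow> a * ((1-x)*(1-y)) \<le> a"
      by (intro mult_left_le) (auto intro: mult_le_one)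
    have b: "(1-p)*(p*(1-p)*((1-s1)*(1-g2))) \<le> p*u"
    proof -
      have "(1-p)*(p*(1-p)*((1-s1)*(1-g2))) = (p*((1-p)*(1-s1))) * ((1-p)*(1-g2))" by (simp add: algebra_simps)
      also have "\<dots> \<le> p*((1-p)*(1-s1))" using L[of "p*((1-p)*(1-s1))" p g2] r p by simp
      also have "\<dots> \<le> p*u" using f1 p by simp
      finally show ?thesis .
    qed
    have c: "(1-p)*(p*(1-p)*((1-g1)*(1-s2))) \<le> p*v"
    proof -
      have "(1-p)*(p*(1-p)*((1-g1)*(1-s2))) = (p*((1-p)*(1-s2))) * ((1-p)*(1-g1))" by (simp add: algebra_simps)
      also have "\<dots> \<le> p*((1-p)*(1-s2))" using L[of "p*((1-p)*(1-s2))" p g1] r p by simp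
      also have "\<dots> \<le> p*v" using f2 p by simp
      finally show ?thesis .
    qed
    have d: "(1-p)*((1-p)^2*((1-s1)*(1-s2))) \<le> (1-p)*u"
    proof -
      have "(1-p)*((1-p)^2*((1-s1)*(1-s2))) = ((1-p)*((1-p)*(1-s1))) * ((1-p)*(1-s2))" by (simp add: algebra_simps power2_eq_square)
      also have "\<dots> \<le> (1-p)*((1-p)*(1-s1))" using L[of "(1-p)*((1-p)*(1-s1))" p s2] r p by simp
      also have "\<dots> \<le> (1-p)*u" using f1 pp by simp
      finally show ?thesis .
    qed
    have "(1-p)*P = (1-p)*(p^2*((1-g1)*(1-g2))) + (1-p)*(p*(1-p)*((1-s1)*(1-g2)))
        + (1-p)*(p*(1-p)*((1-g1)*(1-s2))) + (1-p)*((1-p)^2*((1-s1)*(1-s2)))"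
      unfolding P by (simp add: algebra_simps)
    moreover have "p^2 * v \<le> v" using v0 p by (simp add: mult_left_le_one_le power_le_one)
    moreover have "p * v \<le> v" using v0 p by (simp add: mult_left_le_one_le)
    moreover have "p*u + (1-p)*u = u" by (simp add: algebra_simps)
    ultimately show ?thesis using a b c d by linarith
  qed
  have H1': "(1-e2)*u + e2*m \<le> e2*v" using H1 unfolding u_def v_def m_def by (simp add: algebra_simps)
  have H2': "(1-e1)*v + e1*m \<le> e1*(P + u)" using H2 unfolding u_def v_def m_def by (simp add: algebra_simps)
  have ue: "0 \<le> (1-e2)*u" using u0 e p by simp
  have "e2*m \<le> e2*v" using H1' ue by linarith
  hence mv: "m \<le> v" using e by simp
  have uv: "u \<le> v"
  proof -
    have "0 \<le> e2*m" using e m0 by simp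
    hence "(1-e2)*u \<le> e2*v" using H1' by linarith
    also have "\<dots> \<le> (1-e2)*v" using e p v0 by (intro mult_right_mono) auto
    finally show ?thesis using e p by simp
  qed
  have "0 \<le> e1*m" using e m0 by simp
  hence "(1-e1)*v \<le> e1*(P+u)" using H2' by linarith
  hence "(1-p)*((1-e1)*v) \<le> (1-p)*(e1*(P+u))" using pp by simp
  also have "\<dots> = e1*((1-p)*P + (1-p)*u)" by (simp add: algebra_simps)
  also have "\<dots> \<le> e1*(m + u + 2*v + u)"
  proof -
    have "(1-p)*u \<le> u" using u0 p by (simp add: mult_left_le_one_le)
    hence "(1-p)*P + (1-p)*u \<le> m + u + 2*v + u" using f4 by linarith
    thus ?thesis using e by (intro mult_left_mono) auto
  qed
  also have "\<dots> \<le> e1*(5*v)" using mv uv e by (intro mult_left_mono) auto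
  finally have "(1-p)*((1-e1)*v) \<le> e1*(5*v)" .
  hence "((1-p)*(1-e1) - 5*e1) * v \<le> 0" by (simp add: algebra_simps)
  moreover have "(1-p)*(1-e1) - 5*e1 > 0"
  proof -
    have "(1-p)*e1 \<le> e1" using e p by (simp add: mult_left_le_one_le)
    thus ?thesis using e by (simp add: algebra_simps)
  qed
  ultimately have v00: "v = 0" using v0 by (smt (verit) mult_pos_pos zero_less_mult_iff)
  have "u = 0" using uv u0 v00 by simp
  moreover have "m = 0" using mv m0 v00 by simp
  moreover have "P = 0" using f4 v00 \<open>u=0\<close> \<open>m=0\<close> P0 pp by (smt (verit) mult_pos_pos)
  ultimately show ?thesis using v00 unfolding u_def v_def m_def by simp
qed




definition mu0 :: "pl \<Rightarrow> ty \<Rightarrow> real" where "mu0 i t = (if t = T0 then 1 else 0)"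

lemma supp_mu0[simp]: "supp (mu0 i) = {T0}"
  by (auto simp: supp_def mu0_def)

definition ee :: "pl set \<Rightarrow> (pl \<Rightarrow> real) \<Rightarrow> pl \<Rightarrow> real" where
  "ee J eps i = (if i \<in> J then eps i else 0)"

lemma post_eq: "post mu0 J mut eps i t = (1 - ee J eps i) * (if t = T0 then 1 else 0) + ee J eps i * (if t = mut i then 1 else 0)"
  by (simp add: post_def ee_def mu0_def)

lemma supp_post:
  assumes "i \<in> J \<Longrightarrow> 0 < eps i \<and> eps i < 1 \<and> mut i \<noteq> T0"
  shows "supp (post mu0 J mut eps i) = (if i \<in> J then {T0, mut i} else {T0})"
  using assms by (auto simp: supp_def post_eq ee_def)

lemma sum_post:
  assumes "i \<in> J \<Longrightarrow> 0 < eps i \<and> eps i < 1 \<and> mut i \<noteq> T0"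
  shows "(\<Sum>t\<in>supp (post mu0 J mut eps i). post mu0 J mut eps i t * f t) = (1 - ee J eps i) * f T0 + ee J eps i * f (mut i)"
proof (cases "i \<in> J")
  case True
  with assms have ne: "mut i \<noteq> T0" by auto
  hence ne': "T0 \<noteq> mut i" by metis
  have "supp (post mu0 J mut eps i) = {T0, mut i}" using supp_post[where i=i and J=J and mut=mut and eps=eps, OF assms] True by simp
  thus ?thesis using True assms ne ne' by (simp add: post_eq ee_def)
next
  case False
  have "supp (post mu0 J mut eps i) = {T0}" using supp_post[where i=i and J=J and mut=mut and eps=eps, OF assms] False by simp
  thus ?thesis using False by (simp add: post_eq ee_def)
qed

lemma sum1_post:
  assumes "i \<in> J \<Longrightarrow> 0 < eps i \<and> eps i < 1 \<and> mut i \<noteq> T0"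
  shows "(\<Sum>t\<in>supp (post mu0 J mut eps i). post mu0 J mut eps i t) = 1"
  using sum_post[where i=i and J=J and mut=mut and eps=eps and f="\<lambda>_. 1", OF assms] by simp

lemma dom_b:
  assumes eq: "is_eq p mu b s" and p: "0 < p" "p < 1"
    and t: "T0 \<in> supp (mu i)" and t': "t' \<in> supp (mu (other i))"
  shows "b i (mt i T0 t') = pm 1"
proof -
  let ?x = "b i (mt i T0 t')"
  let ?B = "b (other i) (mt i T0 t')"
  let ?S = "s (other i) t'"
  have mx: "is_mix ?x" using eq t t' unfolding is_eq_def by blast
  have mB: "is_mix ?B" using eq t t' unfolding is_eq_def
    by (metis mt_other other_other)
  have mS: "is_mix ?S" using eq t' unfolding is_eq_def by blast
  have "p * evo i T0 (pm 1) ?B + (1 - p) * evo i T0 (pm 1) ?S \<le> p * evo i T0 ?x ?B + (1 - p) * evo i T0 ?x ?S"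
    using eq t t' is_mix_pm[of 1] unfolding is_eq_def by auto
  hence "p * (1 + ?B act1) + (1-p) * (1 + ?S act1) \<le> p * (?x act1 + ?B act1) + (1-p)*(?x act1 + ?S act1)"
    using evo_T0 mx mB mS is_mix_pm[of 1] by (simp add: pm_def)
  hence "1 \<le> ?x act1" by (simp add: algebra_simps)
  hence "?x act1 = 1" using mix_eq_pm[OF mx] by simp
  thus ?thesis using mix_eq_pm[OF mx] by metis
qed

lemma dom_s:
  assumes eq: "is_eq p mu b s" and p: "0 < p" "p < 1"
    and t: "T0 \<in> supp (mu i)" and one: "(\<Sum>t'\<in>supp (mu (other i)). mu (other i) t') = 1"
  shows "s i T0 = pm 1"
proof -
  let ?x = "s i T0"
  let ?B = "\<lambda>t'. b (other i) (mt i T0 t')"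
  let ?S = "\<lambda>t'. s (other i) t'"
  let ?M = "supp (mu (other i))"
  have mx: "is_mix ?x" using eq t unfolding is_eq_def by blast
  have mB: "\<And>t'. t' \<in> ?M \<Longrightarrow> is_mix (?B t')" using eq t unfolding is_eq_def
    by (metis mt_other other_other)
  have mS: "\<And>t'. t' \<in> ?M \<Longrightarrow> is_mix (?S t')" using eq unfolding is_eq_def by blast
  have ineq: "(\<Sum>t'\<in>?M. mu (other i) t' * (p * evo i T0 (pm 1) (?B t') + (1 - p) * evo i T0 (pm 1) (?S t')))
     \<le> (\<Sum>t'\<in>?M. mu (other i) t' * (p * evo i T0 ?x (?B t') + (1 - p) * evo i T0 ?x (?S t')))"
    using eq t is_mix_pm[of 1] unfolding is_eq_def by auto
  have L: "(\<Sum>t'\<in>?M. mu (other i) t' * (p * evo i T0 (pm 1) (?B t') + (1 - p) * evo i T0 (pm 1) (?S t')))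
     = (\<Sum>t'\<in>?M. mu (other i) t' * (p * evo i T0 ?x (?B t') + (1 - p) * evo i T0 ?x (?S t')) + mu (other i) t' * (1 - ?x act1))"
  proof (rule sum.cong)
    fix t' assume "t' \<in> ?M"
    thus "mu (other i) t' * (p * evo i T0 (pm 1) (?B t') + (1 - p) * evo i T0 (pm 1) (?S t'))
      = mu (other i) t' * (p * evo i T0 ?x (?B t') + (1 - p) * evo i T0 ?x (?S t')) + mu (other i) t' * (1 - ?x act1)"
      using evo_T0 mx mB mS is_mix_pm[of 1] by (simp add: pm_def algebra_simps)
  qed simp
  have "(\<Sum>t'\<in>?M. mu (other i) t' * (1 - ?x act1)) = 1 - ?x act1"
    using one by (simp add: sum_distrib_right[symmetric])
  hence "1 - ?x act1 \<le> 0" using ineq L by (simp add: sum.distrib)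
  hence "?x act1 = 1" using mix_eq_pm[OF mx] by simp
  thus ?thesis using mix_eq_pm[OF mx] by metis
qed

lemma mix_b:
  assumes eq: "is_eq p mu b s" and t: "t \<in> supp (mu i)" and t': "t' \<in> supp (mu (other i))"
  shows "is_mix (b i (mt i t t'))"
  using assms unfolding is_eq_def by blast

lemma mix_s:
  assumes eq: "is_eq p mu b s" and t: "t \<in> supp (mu i)"
  shows "is_mix (s i t)"
  using assms unfolding is_eq_def by blast

lemma eo_pm:
  assumes "b P1 th = pm x1" "b P2 th = pm x2" "s P1 (fst th) = pm y1" "s P2 (snd th) = pm y2"
  shows "eo p b s th f = p^2 * evm f (pm x1) (pm x2) + p*(1-p) * evm f (pm y1) (pm x2)
     + p*(1-p) * evm f (pm x1) (pm y2) + (1-p)^2 * evm f (pm y1) (pm y2)"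
  using assms by (simp add: eo_def)

lemma fitness_post:
  assumes "other i \<in> J \<Longrightarrow> 0 < eps (other i) \<and> eps (other i) < 1 \<and> mut (other i) \<noteq> T0"
  shows "fitness pay p (post mu0 J mut eps) b s i t =
     (1 - ee J eps (other i)) * eo p b s (mt i t T0) (pay i) + ee J eps (other i) * eo p b s (mt i t (mut (other i))) (pay i)"
  unfolding fitness_def by (rule sum_post[where i="other i" and J=J and mut=mut and eps=eps, OF assms])



definition b0 :: "pl \<Rightarrow> ty \<times> ty \<Rightarrow> mix" where "b0 i th = pm 1"
definition s0 :: "pl \<Rightarrow> ty \<Rightarrow> mix" where "s0 i t = pm 1"

lemma pop_mu0: "pop_state mu0"
  by (simp add: pop_state_def fin_dist_def mu0_def)

lemma pm1_mix: "is_mix (pm 1)" by (simp add: is_mix_pm)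
lemma pm_act1[simp]: "pm q act1 = q" by (simp add: pm_def)
lemma pm_act2[simp]: "pm q act2 = 1 - q" by (simp add: pm_def)

lemma mix_le1: "is_mix x \<Longrightarrow> x act1 \<le> 1" using mix_eq_pm by blast

lemma eq0: assumes p: "0 < p" "p < 1" shows "is_eq p mu0 b0 s0"
proof -
  have A: "\<And>i \<sigma>. is_mix \<sigma> \<Longrightarrow> p * evo i T0 \<sigma> (pm 1) + (1-p) * evo i T0 \<sigma> (pm 1) = \<sigma> act1 + 1"
    using evo_T0 pm1_mix by (simp add: algebra_simps)
  have B: "\<And>i. p * evo i T0 (pm 1) (pm 1) + (1-p) * evo i T0 (pm 1) (pm 1) = 2"
    using evo_T0 pm1_mix by (simp add: algebra_simps)
  have C: "\<And>i \<sigma>. is_mix \<sigma> \<Longrightarrow> p * evo i T0 \<sigma> (pm 1) + (1-p) * evo i T0 \<sigma> (pm 1)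
      \<le> p * evo i T0 (pm 1) (pm 1) + (1-p) * evo i T0 (pm 1) (pm 1)"
  proof -
    fix i \<sigma> assume "is_mix \<sigma>"
    thus "p * evo i T0 \<sigma> (pm 1) + (1-p) * evo i T0 \<sigma> (pm 1)
      \<le> p * evo i T0 (pm 1) (pm 1) + (1-p) * evo i T0 (pm 1) (pm 1)"
      unfolding A[OF \<open>is_mix \<sigma>\<close>] B using mix_le1 by simp
  qed
  show ?thesis unfolding is_eq_def b0_def s0_def supp_mu0
  proof (intro conjI allI impI)
    fix i t t' \<sigma> assume "t \<in> {T0} \<and> t' \<in> {T0}" "is_mix \<sigma>"
    thus "p * evo i t \<sigma> (pm 1) + (1-p) * evo i t \<sigma> (pm 1) \<le> p * evo i t (pm 1) (pm 1) + (1-p) * evo i t (pm 1) (pm 1)"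
      using C by blast
  next
    fix i t \<sigma> assume "t \<in> {T0}" "is_mix \<sigma>"
    hence "t = T0" by simp
    have m: "mu0 (other i) T0 = 1" by (simp add: mu0_def)
    show "(\<Sum>t'\<in>{T0}. mu0 (other i) t' * (p * evo i t \<sigma> (pm 1) + (1-p) * evo i t \<sigma> (pm 1)))
        \<le> (\<Sum>t'\<in>{T0}. mu0 (other i) t' * (p * evo i t (pm 1) (pm 1) + (1-p) * evo i t (pm 1) (pm 1)))"
      using m C \<open>is_mix \<sigma>\<close> \<open>t = T0\<close> by simp
  qed (rule pm1_mix)+
qed

lemma agg0: "agg p mu0 b0 s0 c = (if c = (act1, act1) then 1 else 0)"
proof -
  have "agg p mu0 b0 s0 c = (p^2 + 2*(p*(1-p)) + (1-p)^2) * (if c = (act1, act1) then 1 else 0)"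
    by (simp add: agg_def mu0_def eo_def b0_def s0_def evm_pm algebra_simps)
  also have "p^2 + 2*(p*(1-p)) + (1-p)^2 = 1" by (simp add: power2_eq_square algebra_simps)
  finally show ?thesis by simp
qed

lemma bal0: "balanced pay p mu0 b0 s0"
  by (simp add: balanced_def)

lemma conv_pos: fixes a c y :: real shows "0 \<le> y \<Longrightarrow> y \<le> 1 \<Longrightarrow> a > 0 \<Longrightarrow> c > 0 \<Longrightarrow> (1-y)*a + y*c > 0"
proof -
  assume y: "0 \<le> y" "y \<le> 1" and ac: "a > 0" "c > 0"
  show ?thesis
  proof (cases "y = 1")
    case True thus ?thesis using ac by simp
  next
    case False
    hence "(1-y)*a > 0" using y ac by simp
    moreover have "y*c \<ge> 0" using y ac by simp
    ultimately show ?thesis by linarith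
  qed
qed

lemma conv_neg: fixes a c y :: real shows "0 \<le> y \<Longrightarrow> y \<le> 1 \<Longrightarrow> a < 0 \<Longrightarrow> c < 0 \<Longrightarrow> (1-y)*a + y*c < 0"
  using conv_pos[of y "-a" "-c"] by (simp add: algebra_simps)

lemma affine_cases:
  fixes a b :: real
  shows "(\<exists>z. 0 \<le> z \<and> z \<le> 1 \<and> a + b*z = 0) \<or> (\<forall>y. 0 \<le> y \<longrightarrow> y \<le> 1 \<longrightarrow> a + b*y > 0) \<or> (\<forall>y. 0 \<le> y \<longrightarrow> y \<le> 1 \<longrightarrow> a + b*y < 0)"
proof (cases "a + b = 0 \<or> a = 0")
  case True
  show ?thesis
  proof (cases "a = 0")
    case True thus ?thesis by (intro disjI1 exI[of _ "0::real"]) simp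
  next
    case False
    hence "a + b*1 = 0" using \<open>a + b = 0 \<or> a = 0\<close> by simp
    thus ?thesis by (intro disjI1 exI[of _ "1::real"]) simp
  qed
next
  case False
  show ?thesis
  proof (cases "(a > 0) = (a + b > 0)")
    case True
    have "\<forall>y. 0 \<le> y \<longrightarrow> y \<le> 1 \<longrightarrow> (a + b*y > 0) = (a > 0) \<and> a + b*y \<noteq> 0"
    proof (intro allI impI)
      fix y :: real assume y: "0 \<le> y" "y \<le> 1"
      have "a + b*y = (1-y)*a + y*(a+b)" by (simp add: algebra_simps)
      moreover have "a > 0 \<Longrightarrow> (1-y)*a + y*(a+b) > 0"
      proof -
        assume "a > 0" hence "a + b > 0" using True by simp
        thus ?thesis using y \<open>a > 0\<close> conv_pos by blast
      qed
      moreover have "a < 0 \<Longrightarrow> (1-y)*a + y*(a+b) < 0"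
      proof -
        assume "a < 0" hence "a + b < 0" using True False by auto
        thus ?thesis using y \<open>a < 0\<close> conv_neg by blast
      qed
      moreover have "a \<noteq> 0" using False by auto
      ultimately show "(a + b*y > 0) = (a > 0) \<and> a + b*y \<noteq> 0"
        by (metis linorder_neqE_linordered_idom order_less_asym)
    qed
    hence H: "\<And>y. 0 \<le> y \<Longrightarrow> y \<le> 1 \<Longrightarrow> (a + b*y > 0) = (a > 0) \<and> a + b*y \<noteq> 0" by blast
    show ?thesis
    proof (cases "a > 0")
      case True thus ?thesis using H by auto
    next
      case F: False
      have "\<forall>y. 0 \<le> y \<longrightarrow> y \<le> 1 \<longrightarrow> a + b*y < 0"
      proof (intro allI impI)
        fix y :: real assume "0 \<le> y" "y \<le> 1"
        thus "a + b*y < 0" using H[of y] F by linarith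
      qed
      thus ?thesis by blast
    qed
  next
    case False2: False
    define z where "z = a / (- b)"
    have z1: "0 \<le> z \<and> z \<le> 1"
    proof (cases "a > 0")
      case True
      hence "a + b < 0" using False2 False by auto
      hence nb: "-b > 0" "a \<le> -b" using True by auto
      have A: "0 \<le> a / (-b)" using nb True by (intro divide_nonneg_pos) auto
      have B: "a / (-b) \<le> 1" using nb by (subst divide_le_eq_1_pos) auto
      show ?thesis unfolding z_def using A B by blast
    next
      case F: False
      hence "a < 0" using False by auto
      hence "a + b > 0" using False2 False by auto
      hence "b > 0" "-a \<le> b" using \<open>a < 0\<close> by auto
      moreover have "z = (-a) / b" unfolding z_def by simp
      moreover have "0 \<le> (-a) / b" using \<open>b > 0\<close> \<open>a < 0\<close> by (intro divide_nonneg_pos) auto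
      moreover have "(-a) / b \<le> 1" using \<open>b > 0\<close> \<open>-a \<le> b\<close> by (subst divide_le_eq_1_pos) auto
      ultimately show ?thesis by simp
    qed
    have "b \<noteq> 0" using False2 False by auto
    have "a + b*z = 0" unfolding z_def using \<open>b \<noteq> 0\<close> by (simp add: field_simps)
    thus ?thesis using z1 by blast
  qed
qed

lemma fp2:
  fixes f g :: "real \<Rightarrow> real"
  assumes f: "\<And>y. f y = a + b*y" and g: "\<And>x. g x = c + d*x"
  shows "\<exists>x y. 0 \<le> x \<and> x \<le> 1 \<and> 0 \<le> y \<and> y \<le> 1 \<and> (f y > 0 \<longrightarrow> x = 1) \<and> (f y < 0 \<longrightarrow> x = 0)
     \<and> (g x > 0 \<longrightarrow> y = 1) \<and> (g x < 0 \<longrightarrow> y = 0)"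
proof -
  define P where "P = (\<lambda>x y::real. 0 \<le> x \<and> x \<le> 1 \<and> 0 \<le> y \<and> y \<le> 1 \<and> (f y > 0 \<longrightarrow> x = 1) \<and> (f y < 0 \<longrightarrow> x = 0)
     \<and> (g x > 0 \<longrightarrow> y = 1) \<and> (g x < 0 \<longrightarrow> y = 0))"
  define br where "br = (\<lambda>v::real. if v > 0 then 1 else (0::real))"
  have br: "\<And>v. 0 \<le> br v \<and> br v \<le> 1 \<and> (v > 0 \<longrightarrow> br v = 1) \<and> (v < 0 \<longrightarrow> br v = 0)"
    unfolding br_def by auto
  have "\<exists>x y. P x y"
  proof -
    consider (A) "\<exists>z. 0 \<le> z \<and> z \<le> 1 \<and> a + b*z = 0" | (Bp) "\<forall>y. 0 \<le> y \<longrightarrow> y \<le> 1 \<longrightarrow> a + b*y > 0"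
      | (Bn) "\<forall>y. 0 \<le> y \<longrightarrow> y \<le> 1 \<longrightarrow> a + b*y < 0" using affine_cases by blast
    thus ?thesis
    proof cases
      case A
      then obtain z where z: "0 \<le> z" "z \<le> 1" "a + b*z = 0" by blast
      hence fz: "f z = 0" by (simp only: f)
      consider (A2) "\<exists>w. 0 \<le> w \<and> w \<le> 1 \<and> c + d*w = 0" | (Cp) "\<forall>y. 0 \<le> y \<longrightarrow> y \<le> 1 \<longrightarrow> c + d*y > 0"
        | (Cn) "\<forall>y. 0 \<le> y \<longrightarrow> y \<le> 1 \<longrightarrow> c + d*y < 0" using affine_cases by blast
      thus ?thesis
      proof cases
        case A2
        then obtain w where w: "0 \<le> w" "w \<le> 1" "c + d*w = 0" by blast
        hence gw: "g w = 0" by (simp only: g)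
        have "P w z" unfolding P_def using z w gw fz by simp
        thus ?thesis by blast
      next
        case Cp
        define x where "x = br (f 1)"
        have x: "0 \<le> x" "x \<le> 1" using br unfolding x_def by blast+
        have "c + d*x > 0" using Cp x by blast
        hence gx: "g x > 0" by (simp only: g)
        have "P x 1" unfolding P_def using x gx br[of "f 1"] unfolding x_def by auto
        thus ?thesis by blast
      next
        case Cn
        define x where "x = br (f 0)"
        have x: "0 \<le> x" "x \<le> 1" using br unfolding x_def by blast+
        have "c + d*x < 0" using Cn x by blast
        hence gx: "g x < 0" by (simp only: g)
        have "P x 0" unfolding P_def using x gx br[of "f 0"] unfolding x_def by auto
        thus ?thesis by blast
      qed
    next
      case Bp
      define y where "y = br (g 1)"
      have y: "0 \<le> y" "y \<le> 1" using br unfolding y_def by blast+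
      have "a + b*y > 0" using Bp y by blast
      hence fy: "f y > 0" by (simp only: f)
      have "P 1 y" unfolding P_def using y fy br[of "g 1"] unfolding y_def by auto
      thus ?thesis by blast
    next
      case Bn
      define y where "y = br (g 0)"
      have y: "0 \<le> y" "y \<le> 1" using br unfolding y_def by blast+
      have "a + b*y < 0" using Bn y by blast
      hence fy: "f y < 0" by (simp only: f)
      have "P 0 y" unfolding P_def using y fy br[of "g 0"] unfolding y_def by auto
      thus ?thesis by blast
    qed
  qed
  thus ?thesis unfolding P_def .
qed



lemma evm_piG1: "evm (piG P1) (pm x) (pm y) = 5*(x*y + (1-x)*(1-y))"
  by (simp add: evm_pm algebra_simps)
lemma evm_piG2: "evm (piG P2) (pm x) (pm y) = 5*(x*y + (1-x)*(1-y)) + 5*((1-x)*(1-y))"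
  by (simp add: evm_pm algebra_simps)

lemma pl_cases_set: "J \<noteq> {} \<Longrightarrow> J = {P1} \<or> J = {P2} \<or> J = {P1, P2}"
proof -
  assume ne: "J \<noteq> {}"
  have eq: "J = {x. x = P1 \<and> P1 \<in> J \<or> x = P2 \<and> P2 \<in> J}"
  proof (rule set_eqI)
    fix x show "x \<in> J \<longleftrightarrow> x \<in> {x. x = P1 \<and> P1 \<in> J \<or> x = P2 \<and> P2 \<in> J}" by (cases x) auto
  qed
  show ?thesis
  proof (cases "P1 \<in> J"; cases "P2 \<in> J")
    assume "P1 \<in> J" "P2 \<in> J" thus ?thesis by (subst eq) auto
  next
    assume "P1 \<in> J" "P2 \<notin> J" thus ?thesis by (subst eq) auto
  next
    assume "P1 \<notin> J" "P2 \<in> J" thus ?thesis by (subst eq) auto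
  next
    assume "P1 \<notin> J" "P2 \<notin> J" thus ?thesis using ne by (subst (asm) eq) auto
  qed
qed

lemma other_simps[simp]: "other P1 = P2" "other P2 = P1" by simp_all

lemma mt_simps[simp]: "mt P1 t t' = (t, t')" "mt P2 t t' = (t', t)" by (simp_all add: mt_def)

lemma eo_inc_inc:
  assumes "b P1 (T0,T0) = pm 1" "b P2 (T0,T0) = pm 1" "s P1 T0 = pm 1" "s P2 T0 = pm 1"
  shows "eo p b s (T0,T0) (piG i) = 5"
proof -
  have "eo p b s (T0,T0) (piG i) = (p^2 + 2*(p*(1-p)) + (1-p)^2) * 5"
    unfolding eo_def fst_conv snd_conv assms by (cases i) (simp_all add: evm_piG1 evm_piG2 algebra_simps)
  also have "p^2 + 2*(p*(1-p)) + (1-p)^2 = 1" by (simp add: power2_eq_square algebra_simps)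
  finally show ?thesis by simp
qed


lemma part2:
  fixes p :: real
  assumes p: "0 < p" "p < 1" and J: "J \<noteq> {}" and mT: "\<forall>j\<in>J. mut j \<noteq> T0"
    and epsJ: "\<forall>j\<in>J. 0 < eps j \<and> eps j < (1-p)/10"
    and eq: "is_eq p (post mu0 J mut eps) b s"
  shows "(\<exists>j\<in>J. \<forall>t\<in>supp (mu0 j). fitness piG p (post mu0 J mut eps) b s j t > fitness piG p (post mu0 J mut eps) b s j (mut j))
     \<or> balanced piG p (post mu0 J mut eps) b s"
proof -
  define mu' where "mu' = post mu0 J mut eps"
  define e where "e = ee J eps"
  define F where "F = fitness piG p mu' b s"
  have p10: "(1-p)/10 < 1" using p by simp
  have ok: "i \<in> J \<Longrightarrow> 0 < eps i \<and> eps i < 1 \<and> mut i \<noteq> T0" for i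
  proof -
    assume "i \<in> J"
    hence "0 < eps i" "eps i < (1-p)/10" "mut i \<noteq> T0" using epsJ mT by auto
    thus ?thesis using p10 by linarith
  qed
  have suppE: "supp (mu' i) = (if i \<in> J then {T0, mut i} else {T0})" for i
    unfolding mu'_def using supp_post[where i=i and J=J and mut=mut and eps=eps, OF ok] .
  have T0in: "T0 \<in> supp (mu' i)" for i by (simp add: suppE)
  have Min: "i \<in> J \<Longrightarrow> mut i \<in> supp (mu' i)" for i by (simp add: suppE)
  have one: "(\<Sum>t\<in>supp (mu' i). mu' i t) = 1" for i
    unfolding mu'_def using sum1_post[where i=i and J=J and mut=mut and eps=eps, OF ok] .
  have eq': "is_eq p mu' b s" using eq unfolding mu'_def .
  have bT: "t' \<in> supp (mu' (other i)) \<Longrightarrow> b i (mt i T0 t') = pm 1" for i t'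
    using dom_b[OF eq' p T0in] by blast
  have sT: "s i T0 = pm 1" for i
    using dom_s[OF eq' p T0in one] by blast
  have FP: "F i t = (1 - e (other i)) * eo p b s (mt i t T0) (piG i) + e (other i) * eo p b s (mt i t (mut (other i))) (piG i)" for i t
    unfolding F_def mu'_def e_def using fitness_post[where i=i and J=J and mut=mut and eps=eps, OF ok] .
  define bb where "bb i = b i (mt i (mut i) T0) act1" for i
  define ss where "ss i = s i (mut i) act1" for i
  define q where "q i = p * bb i + (1-p) * ss i" for i
  have bbm: "b i (mt i (mut i) T0) = pm (bb i) \<and> 0 \<le> bb i \<and> bb i \<le> 1" if "i \<in> J" for i
    unfolding bb_def using mix_eq_pm[OF mix_b[OF eq' Min[OF that] T0in]] .
  have ssm: "s i (mut i) = pm (ss i) \<and> 0 \<le> ss i \<and> ss i \<le> 1" if "i \<in> J" for i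
    unfolding ss_def using mix_eq_pm[OF mix_s[OF eq' Min[OF that]]] .
  have q1: "q i \<le> 1" if "i \<in> J" for i
  proof -
    have "p * bb i \<le> p" "(1-p) * ss i \<le> 1 - p" using bbm[OF that] ssm[OF that] p
      by (simp_all add: mult_left_le)
    thus ?thesis unfolding q_def by linarith
  qed
  have ee0: "e i = 0" if "i \<notin> J" for i using that by (simp add: e_def ee_def)
  have eeJ: "e i = eps i" if "i \<in> J" for i using that by (simp add: e_def ee_def)
  have incinc: "eo p b s (mt i T0 T0) (piG i) = 5" for i
  proof -
    have "mt i T0 T0 = (T0, T0)" by (simp add: mt_def)
    moreover have "b P1 (T0,T0) = pm 1" using bT[of T0 P1] T0in by simp
    moreover have "b P2 (T0,T0) = pm 1" using bT[of T0 P2] T0in by simp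
    ultimately show ?thesis using eo_inc_inc sT by metis
  qed
  have incmut: "eo p b s (mt i T0 (mut (other i))) (piG i) = 5 * q (other i)" if "other i \<in> J" for i
  proof (cases i)
    case P1
    hence J2: "P2 \<in> J" using that by simp
    have "eo p b s (T0, mut P2) (piG P1) = p^2 * evm (piG P1) (pm 1) (pm (bb P2)) + p*(1-p) * evm (piG P1) (pm 1) (pm (bb P2))
     + p*(1-p) * evm (piG P1) (pm 1) (pm (ss P2)) + (1-p)^2 * evm (piG P1) (pm 1) (pm (ss P2))"
      apply (rule eo_pm)
      using bT[of "mut P2" P1] Min[OF J2] bbm[OF J2] sT ssm[OF J2] by simp_all
    also have "\<dots> = 5 * q P2" unfolding evm_piG1 q_def by (simp add: power2_eq_square algebra_simps)
    finally show ?thesis using P1 by simp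
  next
    case P2
    hence J1: "P1 \<in> J" using that by simp
    have "eo p b s (mut P1, T0) (piG P2) = p^2 * evm (piG P2) (pm (bb P1)) (pm 1) + p*(1-p) * evm (piG P2) (pm (ss P1)) (pm 1)
     + p*(1-p) * evm (piG P2) (pm (bb P1)) (pm 1) + (1-p)^2 * evm (piG P2) (pm (ss P1)) (pm 1)"
      apply (rule eo_pm)
      using bT[of "mut P1" P2] Min[OF J1] bbm[OF J1] sT ssm[OF J1] by simp_all
    also have "\<dots> = 5 * q P1" unfolding evm_piG2 q_def by (simp add: power2_eq_square algebra_simps)
    finally show ?thesis using P2 by simp
  qed
  have mutinc: "eo p b s (mt i (mut i) T0) (piG i) = 5 * q i" if "i \<in> J" for i
  proof (cases i)
    case P1
    hence J1: "P1 \<in> J" using that by simp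
    have "eo p b s (mut P1, T0) (piG P1) = p^2 * evm (piG P1) (pm (bb P1)) (pm 1) + p*(1-p) * evm (piG P1) (pm (ss P1)) (pm 1)
     + p*(1-p) * evm (piG P1) (pm (bb P1)) (pm 1) + (1-p)^2 * evm (piG P1) (pm (ss P1)) (pm 1)"
      apply (rule eo_pm)
      using bT[of "mut P1" P2] Min[OF J1] bbm[OF J1] sT ssm[OF J1] by simp_all
    also have "\<dots> = 5 * q P1" unfolding evm_piG1 q_def by (simp add: power2_eq_square algebra_simps)
    finally show ?thesis using P1 by simp
  next
    case P2
    hence J2: "P2 \<in> J" using that by simp
    have "eo p b s (T0, mut P2) (piG P2) = p^2 * evm (piG P2) (pm 1) (pm (bb P2)) + p*(1-p) * evm (piG P2) (pm 1) (pm (bb P2))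
     + p*(1-p) * evm (piG P2) (pm 1) (pm (ss P2)) + (1-p)^2 * evm (piG P2) (pm 1) (pm (ss P2))"
      apply (rule eo_pm)
      using bT[of "mut P2" P1] Min[OF J2] bbm[OF J2] sT ssm[OF J2] by simp_all
    also have "\<dots> = 5 * q P2" unfolding evm_piG2 q_def by (simp add: power2_eq_square algebra_simps)
    finally show ?thesis using P2 by simp
  qed
  have FT: "F i T0 = 5 * ((1 - e (other i)) + e (other i) * q (other i))" for i
  proof (cases "other i \<in> J")
    case True thus ?thesis using FP[of i T0] incinc[of i] incmut[OF True] by (simp add: algebra_simps)
  next
    case False thus ?thesis using FP[of i T0] incinc[of i] ee0[OF False] by simp
  qed
  have FM: "F i (mut i) = (1 - e (other i)) * (5 * q i) + e (other i) * eo p b s (mt i (mut i) (mut (other i))) (piG i)" if "i \<in> J" for i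
    using FP[of i "mut i"] mutinc[OF that] by simp
  have bal: "balanced piG p mu' b s" if "\<forall>i\<in>J. F i T0 = F i (mut i)"
  proof -
    have "F i t = F i T0" if "t \<in> supp (mu' i)" for i t
    proof (cases "i \<in> J")
      case True
      hence "t = T0 \<or> t = mut i" using \<open>t \<in> supp (mu' i)\<close> suppE[of i] by simp
      thus ?thesis using True \<open>\<forall>i\<in>J. F i T0 = F i (mut i)\<close> by auto
    next
      case False
      hence "t = T0" using \<open>t \<in> supp (mu' i)\<close> suppE[of i] by simp
      thus ?thesis by simp
    qed
    thus ?thesis unfolding balanced_def F_def by metis
  qed
  have goal: "(\<exists>j\<in>J. F j T0 > F j (mut j)) \<or> (\<forall>i\<in>J. F i T0 = F i (mut i))"
  proof -
    consider (A) "J = {P1}" | (B) "J = {P2}" | (C) "J = {P1, P2}" using pl_cases_set[OF J] by blast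
    thus ?thesis
    proof cases
      case A
      hence e2: "e P2 = 0" using ee0[of P2] by simp
      have J1: "P1 \<in> J" using A by simp
      have "F P1 T0 = 5" using FT[of P1] e2 by simp
      moreover have "F P1 (mut P1) = 5 * q P1" using FM[OF J1] e2 by simp
      ultimately show ?thesis using q1[OF J1] A by (cases "q P1 < 1") auto
    next
      case B
      hence e1: "e P1 = 0" using ee0[of P1] by simp
      have J2: "P2 \<in> J" using B by simp
      have "F P2 T0 = 5" using FT[of P2] e1 by simp
      moreover have "F P2 (mut P2) = 5 * q P2" using FM[OF J2] e1 by simp
      ultimately show ?thesis using q1[OF J2] B by (cases "q P2 < 1") auto
    next
      case C
      hence J1: "P1 \<in> J" and J2: "P2 \<in> J" by simp_all
      define g where "g i = b i (mut P1, mut P2) act1" for i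
      have gm: "b i (mut P1, mut P2) = pm (g i) \<and> 0 \<le> g i \<and> g i \<le> 1" for i
      proof (cases i)
        case P1
        have "mut P2 \<in> supp (mu' (other P1))" using Min[OF J2] by simp
        thus ?thesis unfolding g_def P1 using mix_eq_pm[OF mix_b[OF eq' Min[OF J1]]] by simp
      next
        case P2
        have "mut P1 \<in> supp (mu' (other P2))" using Min[OF J1] by simp
        thus ?thesis unfolding g_def P2 using mix_eq_pm[OF mix_b[OF eq' Min[OF J2]]] by simp
      qed
      define CC where "CC = p^2*(g P1*g P2 + (1-g P1)*(1-g P2)) + p*(1-p)*(ss P1*g P2 + (1-ss P1)*(1-g P2))
              + p*(1-p)*(g P1*ss P2 + (1-g P1)*(1-ss P2)) + (1-p)^2*(ss P1*ss P2 + (1-ss P1)*(1-ss P2))"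
      define PP where "PP = p^2*((1-g P1)*(1-g P2)) + p*(1-p)*((1-ss P1)*(1-g P2))
              + p*(1-p)*((1-g P1)*(1-ss P2)) + (1-p)^2*((1-ss P1)*(1-ss P2))"
      have mm: "eo p b s (mut P1, mut P2) f = p^2 * evm f (pm (g P1)) (pm (g P2)) + p*(1-p) * evm f (pm (ss P1)) (pm (g P2))
         + p*(1-p) * evm f (pm (g P1)) (pm (ss P2)) + (1-p)^2 * evm f (pm (ss P1)) (pm (ss P2))" for f
        apply (rule eo_pm) using gm ssm[OF J1] ssm[OF J2] by simp_all
      have mm1: "eo p b s (mut P1, mut P2) (piG P1) = 5 * CC"
        unfolding mm evm_piG1 CC_def by (simp add: algebra_simps)
      have mm2: "eo p b s (mut P1, mut P2) (piG P2) = 5 * (CC + PP)"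
        unfolding mm evm_piG2 CC_def PP_def by (simp add: algebra_simps)
      have F1T: "F P1 T0 = 5 * ((1 - eps P2) + eps P2 * q P2)" using FT[of P1] eeJ[OF J2] by simp
      have F2T: "F P2 T0 = 5 * ((1 - eps P1) + eps P1 * q P1)" using FT[of P2] eeJ[OF J1] by simp
      have F1M: "F P1 (mut P1) = 5 * ((1 - eps P2) * q P1 + eps P2 * CC)" using FM[OF J1] eeJ[OF J2] mm1 by (simp add: algebra_simps)
      have F2M: "F P2 (mut P2) = 5 * ((1 - eps P1) * q P2 + eps P1 * (CC + PP))" using FM[OF J2] eeJ[OF J1] mm2 by (simp add: algebra_simps)
      show ?thesis
      proof (cases "F P1 T0 > F P1 (mut P1)")
        case True thus ?thesis using J1 by blast
      next
        case n1: False
        show ?thesis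
        proof (cases "F P2 T0 > F P2 (mut P2)")
          case True thus ?thesis using J2 by blast
        next
          case n2: False
          have H1: "(1 - eps P2) + eps P2 * q P2 \<le> (1 - eps P2) * q P1 + eps P2 * CC" using n1 F1T F1M by simp
          have H2: "(1 - eps P1) + eps P1 * q P1 \<le> (1 - eps P1) * q P2 + eps P1 * (CC + PP)" using n2 F2T F2M by simp
          have e1: "0 < eps P1" "eps P1 < (1-p)/10" using epsJ J1 by auto
          have e2: "0 < eps P2" "eps P2 < (1-p)/10" using epsJ J2 by auto
          have R: "q P1 = 1 \<and> q P2 = 1 \<and> CC = 1 \<and> PP = 0"
            using core[OF p e1 e2, of "bb P1" "ss P1" "g P1" "bb P2" "ss P2" "g P2" "q P1" "q P2" CC PP]
              bbm[OF J1] ssm[OF J1] gm[of P1] bbm[OF J2] ssm[OF J2] gm[of P2] H1 H2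
            unfolding q_def CC_def PP_def by blast
          hence "F P1 T0 = F P1 (mut P1)" "F P2 T0 = F P2 (mut P2)" using F1T F1M F2T F2M by simp_all
          thus ?thesis using C by auto
        qed
      qed
    qed
  qed
  thus ?thesis
  proof
    assume "\<exists>j\<in>J. F j T0 > F j (mut j)"
    thus ?thesis unfolding F_def mu'_def by simp
  next
    assume "\<forall>i\<in>J. F i T0 = F i (mut i)"
    thus ?thesis using bal unfolding mu'_def by blast
  qed
qed



lemma W_T0_adv: "adv i T0 y = 1" by (simp add: adv_def W_T0)

lemma evo_T0_le: "is_mix \<sigma> \<Longrightarrow> is_mix y \<Longrightarrow> evo i T0 \<sigma> y \<le> evo i T0 (pm 1) y"
  using evo_T0 pm1_mix mix_le1 by (simp)

lemma part1:
  fixes p :: real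
  assumes p: "0 < p" "p < 1" and mT: "\<forall>j\<in>J. mut j \<noteq> T0"
    and epsJ: "\<forall>j\<in>J. 0 < eps j \<and> eps j < 1"
    and sgn: "\<And>i z. 0 \<le> z \<Longrightarrow> z \<le> 1 \<Longrightarrow> adv i (mut i) 1 \<noteq> 0 \<Longrightarrow>
       (adv i (mut i) ((1 - ee J eps (other i)) + ee J eps (other i) * z) > 0 \<longleftrightarrow> adv i (mut i) 1 > 0) \<and>
       (adv i (mut i) ((1 - ee J eps (other i)) + ee J eps (other i) * z) < 0 \<longleftrightarrow> adv i (mut i) 1 < 0)"
  shows "\<exists>b s. is_eq p (post mu0 J mut eps) b s \<and> (\<forall>i. b i (T0,T0) = pm 1) \<and> (\<forall>i. s i T0 = pm 1)"
proof -
  define mu' where "mu' = post mu0 J mut eps"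
  define e where "e = ee J eps"
  have ok: "i \<in> J \<Longrightarrow> 0 < eps i \<and> eps i < 1 \<and> mut i \<noteq> T0" for i using epsJ mT by auto
  have suppE: "supp (mu' i) = (if i \<in> J then {T0, mut i} else {T0})" for i
    unfolding mu'_def using supp_post[where i=i and J=J and mut=mut and eps=eps, OF ok] .
  have sumE: "(\<Sum>t\<in>supp (mu' i). mu' i t * f t) = (1 - e i) * f T0 + e i * f (mut i)" for i f
    unfolding mu'_def e_def using sum_post[where i=i and J=J and mut=mut and eps=eps, OF ok] .
  have ee0: "e i = 0" if "i \<notin> J" for i using that by (simp add: e_def ee_def)
  have eeJ: "e i = eps i" if "i \<in> J" for i using that by (simp add: e_def ee_def)
  have e01: "0 \<le> e i" for i using epsJ by (simp add: e_def ee_def less_imp_le)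
  have mu'nn: "0 \<le> mu' i t" for i t unfolding mu'_def post_eq e_def[symmetric]
    using e01[of i] ok[of i] by (auto simp: e_def ee_def)
  define A where "A i y = adv i (mut i) y" for i y
  have Aaff: "A i y = A i 0 + y * (A i 1 - A i 0)" for i y
    unfolding A_def by (subst adv_affine) (simp add: algebra_simps)
  define r where "r i = (if A i 1 \<ge> 0 then 1 else (0::real))" for i
  define fx where "fx i = (A i 1 \<noteq> 0)" for i
  define al where "al i = (if fx i then p else 1)" for i
  define be where "be i = (if fx i then (1-p) * r i else 0)" for i
  define z where "z i g = al i * g + be i" for i g
  have r01: "0 \<le> r i \<and> r i \<le> 1" for i by (simp add: r_def)
  have z01: "0 \<le> g \<Longrightarrow> g \<le> 1 \<Longrightarrow> 0 \<le> z i g \<and> z i g \<le> 1" for i g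
  proof -
    assume g: "0 \<le> g" "g \<le> 1"
    show ?thesis
    proof (cases "fx i")
      case True
      hence zz: "z i g = p * g + (1-p) * r i" by (simp add: z_def al_def be_def)
      have "p * g \<le> p" "(1-p) * r i \<le> 1 - p" using g p r01[of i] by (simp_all add: mult_left_le)
      moreover have "0 \<le> p * g" "0 \<le> (1-p) * r i" using g p r01[of i] by simp_all
      ultimately show ?thesis unfolding zz by linarith
    next
      case False thus ?thesis using g by (simp add: z_def al_def be_def)
    qed
  qed
  obtain x y where xy: "0 \<le> x" "x \<le> 1" "0 \<le> y" "y \<le> 1"
    "A P1 (z P2 y) > 0 \<longrightarrow> x = 1" "A P1 (z P2 y) < 0 \<longrightarrow> x = 0"
    "A P2 (z P1 x) > 0 \<longrightarrow> y = 1" "A P2 (z P1 x) < 0 \<longrightarrow> y = 0"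
  proof -
    have f: "A P1 (z P2 yy) = (A P1 0 + be P2 * (A P1 1 - A P1 0)) + (al P2 * (A P1 1 - A P1 0)) * yy" for yy
      by (subst Aaff) (simp add: z_def algebra_simps)
    have g: "A P2 (z P1 xx) = (A P2 0 + be P1 * (A P2 1 - A P2 0)) + (al P1 * (A P2 1 - A P2 0)) * xx" for xx
      by (subst Aaff) (simp add: z_def algebra_simps)
    show ?thesis using fp2[where f="\<lambda>yy. A P1 (z P2 yy)" and g="\<lambda>xx. A P2 (z P1 xx)", OF f g]
      by (elim exE conjE) (rule that; assumption)
  qed
  define \<gamma> where "\<gamma> i = (if i = P1 then x else y)" for i
  have g01: "0 \<le> \<gamma> i \<and> \<gamma> i \<le> 1" for i using xy(1-4) by (simp add: \<gamma>_def)
  have GR: "(A i (z (other i) (\<gamma> (other i))) > 0 \<longrightarrow> \<gamma> i = 1) \<and> (A i (z (other i) (\<gamma> (other i))) < 0 \<longrightarrow> \<gamma> i = 0)" for i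
  proof (cases i)
    case P1
    hence "\<gamma> i = x" "\<gamma> (other i) = y" "z (other i) = z P2" "A i = A P1" by (simp_all add: \<gamma>_def)
    thus ?thesis using xy(5,6) by metis
  next
    case P2
    hence "\<gamma> i = y" "\<gamma> (other i) = x" "z (other i) = z P1" "A i = A P2" by (simp_all add: \<gamma>_def)
    thus ?thesis using xy(7,8) by metis
  qed
  define \<sigma> where "\<sigma> i = (if fx i then r i else \<gamma> i)" for i
  have s01: "0 \<le> \<sigma> i \<and> \<sigma> i \<le> 1" for i using r01 g01 by (simp add: \<sigma>_def)
  have zeq: "z i (\<gamma> i) = p * \<gamma> i + (1-p) * \<sigma> i" for i
    by (simp add: z_def al_def be_def \<sigma>_def algebra_simps)
  define b' where "b' i th = (if (if i = P1 then fst th else snd th) = T0 then pm 1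
      else if (if i = P1 then snd th else fst th) = T0 then pm (r i) else pm (\<gamma> i))" for i th
  define s' where "s' i t = (if t = T0 then pm 1 else pm (\<sigma> i))" for i t
  have bmt: "b' i (mt i t t') = (if t = T0 then pm 1 else if t' = T0 then pm (r i) else pm (\<gamma> i))" for i t t'
    by (cases i) (simp_all add: b'_def)
  have bmto: "b' (other i) (mt i t t') = (if t' = T0 then pm 1 else if t = T0 then pm (r (other i)) else pm (\<gamma> (other i)))" for i t t'
    using bmt[of "other i" t' t] by (simp add: mt_other)
  have bmix: "is_mix (b' i th)" for i th using r01 g01 by (simp add: b'_def is_mix_pm)
  have smix: "is_mix (s' i t)" for i t using s01 by (simp add: s'_def is_mix_pm)
  have suppM: "t \<in> supp (mu' i) \<Longrightarrow> t \<noteq> T0 \<Longrightarrow> i \<in> J \<and> t = mut i" for i t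
    by (cases "i \<in> J") (auto simp: suppE)
  have mutNT: "i \<in> J \<Longrightarrow> mut i \<noteq> T0" for i using mT by auto
  have bBR: "p * evo i t s0 (b' (other i) (mt i t t')) + (1 - p) * evo i t s0 (s' (other i) t')
      \<le> p * evo i t (b' i (mt i t t')) (b' (other i) (mt i t t')) + (1 - p) * evo i t (b' i (mt i t t')) (s' (other i) t')"
    if t: "t \<in> supp (mu' i)" and t': "t' \<in> supp (mu' (other i))" and sm: "is_mix s0" for i t t' s0
  proof (cases "t = T0")
    case True
    have "evo i t s0 (b' (other i) (mt i t t')) \<le> evo i t (b' i (mt i t t')) (b' (other i) (mt i t t'))"
      using evo_T0_le[OF sm bmix] True bmt by simp
    moreover have "evo i t s0 (s' (other i) t') \<le> evo i t (b' i (mt i t t')) (s' (other i) t')"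
      using evo_T0_le[OF sm smix] True bmt by simp
    ultimately show ?thesis using p by (intro add_mono mult_left_mono) auto
  next
    case False
    hence iJ: "i \<in> J" and tm: "t = mut i" using suppM t by auto
    obtain s1 where s1: "s0 = pm s1" "0 \<le> s1" "s1 \<le> 1" using mix_eq_pm[OF sm] by blast
    define o' where "o' = other i"
    have W1: "p * W i t s1 u + (1-p) * W i t s1 v = W i t s1 (p*u + (1-p)*v)" for s1 u v
      by (rule W_comb) simp
    show ?thesis
    proof (cases "t' = T0")
      case True
      have red: "p * evo i t s2 (b' (other i) (mt i t t')) + (1 - p) * evo i t s2 (s' (other i) t') = W i t s2' 1"
        if "s2 = pm s2'" for s2 s2'
        using W1[of s2' 1 1] True that by (simp add: bmto s'_def evo_pm)
      have "W i t s1 1 \<le> W i t (r i) 1"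
        using BR[of s1 i t 1 "r i"] s1 tm unfolding r_def A_def by auto
      thus ?thesis using red[OF s1(1)] red[of "b' i (mt i t t')" "r i"] bmt False True by simp
    next
      case F2: False
      hence oJ: "other i \<in> J" and tm': "t' = mut (other i)" using suppM t' by auto
      have red: "p * evo i t s2 (b' (other i) (mt i t t')) + (1 - p) * evo i t s2 (s' (other i) t') = W i t s2' (z (other i) (\<gamma> (other i)))"
        if "s2 = pm s2'" for s2 s2'
        using W1[of s2' "\<gamma> (other i)" "\<sigma> (other i)"] F2 False that by (simp add: bmto s'_def evo_pm zeq)
      have "W i t s1 (z (other i) (\<gamma> (other i))) \<le> W i t (\<gamma> i) (z (other i) (\<gamma> (other i)))"
        using BR[of s1 i t _ "\<gamma> i"] s1 tm GR[of i] unfolding A_def by auto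
      thus ?thesis using red[OF s1(1)] red[of "b' i (mt i t t')" "\<gamma> i"] bmt False F2 by simp
    qed
  qed
  have sBR: "(\<Sum>t'\<in>supp (mu' (other i)). mu' (other i) t' *
              (p * evo i t s0 (b' (other i) (mt i t t')) + (1 - p) * evo i t s0 (s' (other i) t')))
           \<le> (\<Sum>t'\<in>supp (mu' (other i)). mu' (other i) t' *
              (p * evo i t (s' i t) (b' (other i) (mt i t t')) + (1 - p) * evo i t (s' i t) (s' (other i) t')))"
    if t: "t \<in> supp (mu' i)" and sm: "is_mix s0" for i t s0
  proof (cases "t = T0")
    case True
    show ?thesis
    proof (rule sum_mono)
      fix t' assume "t' \<in> supp (mu' (other i))"
      have "evo i t s0 (b' (other i) (mt i t t')) \<le> evo i t (s' i t) (b' (other i) (mt i t t'))"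
        using evo_T0_le[OF sm bmix] True by (simp add: s'_def)
      moreover have "evo i t s0 (s' (other i) t') \<le> evo i t (s' i t) (s' (other i) t')"
        using evo_T0_le[OF sm smix] True by (simp add: s'_def)
      ultimately show "mu' (other i) t' * (p * evo i t s0 (b' (other i) (mt i t t')) + (1 - p) * evo i t s0 (s' (other i) t'))
          \<le> mu' (other i) t' * (p * evo i t (s' i t) (b' (other i) (mt i t t')) + (1 - p) * evo i t (s' i t) (s' (other i) t'))"
        using p mu'nn by (intro mult_left_mono add_mono) auto
    qed
  next
    case False
    hence iJ: "i \<in> J" and tm: "t = mut i" using suppM t by auto
    obtain s1 where s1: "s0 = pm s1" "0 \<le> s1" "s1 \<le> 1" using mix_eq_pm[OF sm] by blast
    define o' where "o' = other i"
    define Ym where "Ym = (if o' \<in> J then z o' (\<gamma> o') else 0)"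
    have Ym01: "0 \<le> Ym \<and> Ym \<le> 1" unfolding Ym_def using z01 g01 by auto
    have W1: "p * W i t s1 u + (1-p) * W i t s1 v = W i t s1 (p*u + (1-p)*v)" for s1 u v
      by (rule W_comb) simp
    have W2: "(1 - e o') * W i t s1 u + e o' * W i t s1 v = W i t s1 ((1 - e o')*u + e o' * v)" for s1 u v
      by (rule W_comb) simp
    have red: "(\<Sum>t'\<in>supp (mu' (other i)). mu' (other i) t' *
              (p * evo i t s2 (b' (other i) (mt i t t')) + (1 - p) * evo i t s2 (s' (other i) t')))
            = W i t s2' ((1 - e o') + e o' * Ym)" if "s2 = pm s2'" for s2 s2'
    proof -
      have "(\<Sum>t'\<in>supp (mu' (other i)). mu' (other i) t' *
              (p * evo i t s2 (b' (other i) (mt i t t')) + (1 - p) * evo i t s2 (s' (other i) t')))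
          = (1 - e o') * (p * evo i t s2 (b' (other i) (mt i t T0)) + (1 - p) * evo i t s2 (s' (other i) T0))
            + e o' * (p * evo i t s2 (b' (other i) (mt i t (mut o'))) + (1 - p) * evo i t s2 (s' (other i) (mut o')))"
        unfolding o'_def by (rule sumE)
      also have "(p * evo i t s2 (b' (other i) (mt i t T0)) + (1 - p) * evo i t s2 (s' (other i) T0)) = W i t s2' 1"
        using W1[of s2' 1 1] that by (simp add: bmto s'_def evo_pm)
      also have "e o' * (p * evo i t s2 (b' (other i) (mt i t (mut o'))) + (1 - p) * evo i t s2 (s' (other i) (mut o')))
          = e o' * W i t s2' Ym"
      proof (cases "o' \<in> J")
        case True
        hence "mut o' \<noteq> T0" using mutNT by blast
        hence "p * evo i t s2 (b' (other i) (mt i t (mut o'))) + (1 - p) * evo i t s2 (s' (other i) (mut o')) = W i t s2' Ym"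
          using W1[of s2' "\<gamma> o'" "\<sigma> o'"] that False True
          by (simp add: bmto s'_def evo_pm zeq Ym_def o'_def)
        thus ?thesis by simp
      next
        case False thus ?thesis using ee0 by simp
      qed
      finally show ?thesis using W2[of s2' 1 Ym] by simp
    qed
    define w where "w = (1 - e o') + e o' * Ym"
    have cond: "(adv i t w > 0 \<longrightarrow> \<sigma> i = 1) \<and> (adv i t w < 0 \<longrightarrow> \<sigma> i = 0)"
    proof -
      have ww: "adv i t w = A i w" by (simp add: A_def tm)
      show "(adv i t w > 0 \<longrightarrow> \<sigma> i = 1) \<and> (adv i t w < 0 \<longrightarrow> \<sigma> i = 0)"
      proof (cases "fx i")
        case True
        hence "A i 1 \<noteq> 0" by (simp add: fx_def)
        hence "(A i w > 0 \<longleftrightarrow> A i 1 > 0) \<and> (A i w < 0 \<longleftrightarrow> A i 1 < 0)"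
          using sgn[of Ym i] Ym01 unfolding A_def w_def o'_def e_def by blast
        thus ?thesis using True by (auto simp: \<sigma>_def r_def ww)
      next
        case False
        hence A1: "A i 1 = 0" by (simp add: fx_def)
        have Aw: "A i w = e o' * ((1 - Ym) * A i 0)" using Aaff[of i w] A1 by (simp add: w_def algebra_simps)
        show ?thesis
        proof (cases "e o' > 0")
          case True
          hence oJ: "o' \<in> J" using ee0 by force
          have Az: "A i (z o' (\<gamma> o')) = (1 - Ym) * A i 0" using Aaff[of i "z o' (\<gamma> o')"] A1 oJ
            by (simp add: Ym_def algebra_simps)
          have "(A i w > 0 \<longleftrightarrow> A i (z o' (\<gamma> o')) > 0) \<and> (A i w < 0 \<longleftrightarrow> A i (z o' (\<gamma> o')) < 0)"
            unfolding Aw Az using True by (simp add: zero_less_mult_iff mult_less_0_iff)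
          thus ?thesis using GR[of i] False unfolding o'_def by (auto simp: \<sigma>_def ww)
        next
          case F3: False
          hence "e o' = 0" using e01[of o'] by simp
          thus ?thesis using Aw by (simp add: ww)
        qed
      qed
    qed
    have "W i t s1 w \<le> W i t (\<sigma> i) w" using BR[OF s1(2,3)] cond by blast
    moreover have "s' i t = pm (\<sigma> i)" using False by (simp add: s'_def)
    ultimately show ?thesis using red[OF s1(1)] red[of "s' i t" "\<sigma> i"] unfolding w_def o'_def by simp
  qed
  have "is_eq p mu' b' s'"
    unfolding is_eq_def
    using bBR sBR bmix smix by blast
  moreover have "\<forall>i. b' i (T0,T0) = pm 1" by (simp add: b'_def)
  moreover have "\<forall>i. s' i T0 = pm 1" by (simp add: s'_def)
  ultimately show ?thesis unfolding mu'_def by blast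
qed



lemma mdist_self: "mdist x x = 0"
  by (simp add: mdist_def)

lemma sign_pres:
  fixes a d e z :: real
  assumes "a \<noteq> 0" "0 \<le> z" "z \<le> 1" "0 \<le> e" "e * \<bar>d\<bar> < \<bar>a\<bar>"
  shows "(a + e*(1-z)*d > 0 \<longleftrightarrow> a > 0) \<and> (a + e*(1-z)*d < 0 \<longleftrightarrow> a < 0)"
proof -
  have "\<bar>e*(1-z)*d\<bar> = e*(1-z)*\<bar>d\<bar>" using assms by (simp add: abs_mult)
  also have "\<dots> = (e * \<bar>d\<bar>) * (1 - z)" by (simp add: algebra_simps)
  also have "\<dots> \<le> e * \<bar>d\<bar>" using assms by (intro mult_left_le) auto
  finally have "\<bar>e*(1-z)*d\<bar> < \<bar>a\<bar>" using assms by linarith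
  thus ?thesis by linarith
qed

lemma stable0:
  fixes p :: real
  assumes p: "0 < p" "p < 1"
  shows "stable_config piG p mu0 b0 s0"
  unfolding stable_config_def
proof (intro conjI allI impI)
  show "balanced piG p mu0 b0 s0" by (rule bal0)
next
  fix J mut and eta :: real
  assume J: "J \<noteq> {}" and mJ: "\<forall>j\<in>J. mut j \<notin> supp (mu0 j)" and eta: "0 < eta"
  have mT: "\<forall>j\<in>J. mut j \<noteq> T0" using mJ by simp
  define A where "A i y = adv i (mut i) y" for i y
  have Aaff: "A i y = A i 1 + (1 - y) * (A i 0 - A i 1)" for i y
    unfolding A_def by (subst adv_affine) (simp add: algebra_simps)
  define kk where "kk i = (if A i 1 = 0 then 1 else \<bar>A i 1\<bar> / (\<bar>A i 1\<bar> + \<bar>A i 0 - A i 1\<bar>))" for i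
  have kk0: "0 < kk i" for i by (simp add: kk_def)
  have kk1: "kk i \<le> 1" for i
  proof (cases "A i 1 = 0")
    case True thus ?thesis by (simp add: kk_def)
  next
    case False
    hence pos: "0 < \<bar>A i 1\<bar> + \<bar>A i 0 - A i 1\<bar>" by (simp add: add_pos_nonneg)
    have "\<bar>A i 1\<bar> / (\<bar>A i 1\<bar> + \<bar>A i 0 - A i 1\<bar>) \<le> 1" using pos by (subst divide_le_eq_1_pos) auto
    thus ?thesis using False by (simp add: kk_def)
  qed
  define ep where "ep = (1-p)/10 * min (kk P1) (kk P2)"
  have ep0: "0 < ep" unfolding ep_def using p kk0 by simp
  have epk: "ep \<le> kk i" for i
  proof -
    have "min (kk P1) (kk P2) \<le> kk i" by (cases i) auto
    moreover have "(1-p)/10 \<le> 1" "0 \<le> min (kk P1) (kk P2)" using p kk0 by (auto simp: less_imp_le)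
    ultimately have "(1-p)/10 * min (kk P1) (kk P2) \<le> 1 * kk i"
      using p by (intro mult_mono) auto
    thus ?thesis unfolding ep_def by simp
  qed
  have epp: "ep \<le> (1-p)/10"
  proof -
    have "min (kk P1) (kk P2) \<le> 1" using kk1[of P1] by simp
    thus ?thesis unfolding ep_def using p by (simp add: mult_left_le)
  qed
  have ep1: "ep < 1" using epp p by simp
  show "\<exists>eta' ep. 0 \<le> eta' \<and> eta' < eta \<and> 0 < ep \<and> ep < 1 \<and>
           (\<forall>eps. (\<forall>j\<in>J. 0 < eps j \<and> eps j < ep) \<longrightarrow>
              (let mu' = post mu0 J mut eps in
                 nearby p mu' mu0 b0 s0 eta' \<noteq> {} \<and>
                 (\<forall>(b', s')\<in>nearby p mu' mu0 b0 s0 eta'.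
                    (\<exists>j\<in>J. \<forall>t\<in>supp (mu0 j). fitness piG p mu' b' s' j t > fitness piG p mu' b' s' j (mut j))
                    \<or> balanced piG p mu' b' s')))"
    apply (rule exI[of _ "0::real"], rule exI[of _ ep])
    apply (intro conjI)
        apply simp
       apply (rule eta)
      apply (rule ep0)
     apply (rule ep1)
  proof (intro allI impI)
    fix eps assume epsJ: "\<forall>j\<in>J. 0 < eps j \<and> eps j < ep"
    have epsJ1: "\<forall>j\<in>J. 0 < eps j \<and> eps j < 1" using epsJ ep1 by force
    have epsJ2: "\<forall>j\<in>J. 0 < eps j \<and> eps j < (1-p)/10" using epsJ epp by force
    have sgn: "(adv i (mut i) ((1 - ee J eps (other i)) + ee J eps (other i) * z) > 0 \<longleftrightarrow> adv i (mut i) 1 > 0) \<and>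
       (adv i (mut i) ((1 - ee J eps (other i)) + ee J eps (other i) * z) < 0 \<longleftrightarrow> adv i (mut i) 1 < 0)"
      if z: "0 \<le> z" "z \<le> 1" and a: "adv i (mut i) 1 \<noteq> 0" for i z
    proof -
      define e where "e = ee J eps (other i)"
      have e0: "0 \<le> e" "e < ep" using epsJ ep0 by (auto simp: e_def ee_def less_imp_le)
      have a': "A i 1 \<noteq> 0" using a by (simp add: A_def)
      have ed: "e * \<bar>A i 0 - A i 1\<bar> < \<bar>A i 1\<bar>"
      proof (cases "A i 0 - A i 1 = 0")
        case True thus ?thesis using a' by simp
      next
        case False
        hence dpos: "0 < \<bar>A i 0 - A i 1\<bar>" by simp
        have "e * \<bar>A i 0 - A i 1\<bar> < kk i * \<bar>A i 0 - A i 1\<bar>"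
          using e0 epk[of i] dpos by (intro mult_strict_right_mono) auto
        also have "\<dots> = \<bar>A i 1\<bar> * (\<bar>A i 0 - A i 1\<bar> / (\<bar>A i 1\<bar> + \<bar>A i 0 - A i 1\<bar>))"
          using a' by (simp add: kk_def)
        also have "\<dots> \<le> \<bar>A i 1\<bar> * 1"
          using dpos by (intro mult_left_mono) (auto simp: divide_le_eq_1)
        finally show ?thesis by simp
      qed
      have "A i ((1 - e) + e * z) = A i 1 + e * (1 - z) * (A i 0 - A i 1)"
        by (subst Aaff) (simp add: algebra_simps)
      thus ?thesis using sign_pres[OF a' z e0(1) ed] unfolding A_def e_def by simp
    qed
    obtain b s where bs: "is_eq p (post mu0 J mut eps) b s" "\<forall>i. b i (T0,T0) = pm 1" "\<forall>i. s i T0 = pm 1"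
      using part1[OF p mT epsJ1 sgn] by blast
    have "(b, s) \<in> nearby p (post mu0 J mut eps) mu0 b0 s0 0"
      unfolding nearby_def using bs by (simp add: b0_def s0_def mdist_self)
    hence ne: "nearby p (post mu0 J mut eps) mu0 b0 s0 0 \<noteq> {}" by blast
    have all0: "(\<exists>j\<in>J. \<forall>t\<in>supp (mu0 j). fitness piG p (post mu0 J mut eps) b' s' j t > fitness piG p (post mu0 J mut eps) b' s' j (mut j))
                    \<or> balanced piG p (post mu0 J mut eps) b' s'"
      if "(b', s') \<in> nearby p (post mu0 J mut eps) mu0 b0 s0 0" for b' s'
    proof -
      have "is_eq p (post mu0 J mut eps) b' s'" using that unfolding nearby_def by simp
      thus ?thesis by (rule part2[OF p J mT epsJ2])
    qed
    show "let mu' = post mu0 J mut eps in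
                 nearby p mu' mu0 b0 s0 0 \<noteq> {} \<and>
                 (\<forall>(b', s')\<in>nearby p mu' mu0 b0 s0 0.
                    (\<exists>j\<in>J. \<forall>t\<in>supp (mu0 j). fitness piG p mu' b' s' j t > fitness piG p mu' b' s' j (mut j))
                    \<or> balanced piG p mu' b' s')"
      unfolding Let_def
      apply (intro conjI ne ballI)
      subgoal for x using all0[of "fst x" "snd x"] by (simp add: case_prod_beta)
      done
  qed
qed

theorem mainTheorem18:
  fixes p :: real
  assumes "0 < p" and "p < 1"
  shows "stable_profile piG p (act1, act1)"
  unfolding stable_profile_def
  using pop_mu0 eq0[OF assms] stable0[OF assms] agg0 by blast


end
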